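(* Let $m\ge1$ and $n\in\mathbb{R}$. Suppose the boxes $b_0,\ldots,b_{m-1}$ are independent variables where each $b_i$ ranges over the whole real interval $[u_i,v_i]$, and $\sum_{i=0}^{m-1}u_i\le n\le\sum_{i=0}^{m-1}v_i$. Then there is no sequence $T=(t_0,\ldots,t_{m-1})$ of reals such that both (1) $\sum_{i}t_i<n$, and (2) for every choice of $B=(b_0,\ldots,b_{m-1})$ in the allowed ranges with $\sum_i b_i\le n$ and every $l\in\{1,\ldots,m\}$, there exists $i$ such that $\sum_{j=i}^{i+l'-1}b_j\le\sum_{j=i}^{i+l'-1}t_j$ for all $l'\in\{1,\ldots,l\}$.
   Context: Indices are taken modulo $m$. The chain $c_i^{l}$ is $(b_i,\ldots,b_{i+l-1})$ with sum $\|c_i^{l}\|=\sum_{j=i}^{i+l-1}b_j$. *)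

theory Defs
  imports Complex_Main
begin

definition chain_sum :: "nat \<Rightarrow> (nat \<Rightarrow> real) \<Rightarrow> nat \<Rightarrow> nat \<Rightarrow> real" where
  "chain_sum m b i l = (\<Sum>j = i..<i + l. b (j mod m))"

end

theory Submission
  imports Defs
begin

lemma full_period:
  fixes f :: "nat \<Rightarrow> real"
  assumes "m \<ge> 1"
  shows "(\<Sum>j = i..<i + m. f (j mod m)) = (\<Sum>j<m. f j)"
proof (induction i)
  case 0
  then show ?case by (simp add: atLeast0LessThan)
next
  case (Suc i)
  have a: "(\<Sum>j = i..<Suc (i + m). f (j mod m)) = (\<Sum>j = i..<i + m. f (j mod m)) + f ((i+m) mod m)"
    by (simp add: sum.atLeastLessThan_Suc)
  have b: "(\<Sum>j = i..<Suc (i + m). f (j mod m)) = f (i mod m) + (\<Sum>j = Suc i..<Suc (i + m). f (j mod m))"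
    using assms by (subst sum.atLeast_Suc_lessThan) auto
  have c: "(i+m) mod m = i mod m" by simp
  show ?case using a b c Suc by simp
qed

theorem mainTheorem5:
  fixes m :: nat and n :: real and u v :: "nat \<Rightarrow> real"
  assumes "m \<ge> 1"
    and "\<forall>i<m. u i \<le> v i"
    and "(\<Sum>i<m. u i) \<le> n" and "n \<le> (\<Sum>i<m. v i)"
  shows "\<not> (\<exists>t :: nat \<Rightarrow> real.
            (\<Sum>i<m. t i) < n \<and>
            (\<forall>b :: nat \<Rightarrow> real.
               (\<forall>i<m. u i \<le> b i \<and> b i \<le> v i) \<and> (\<Sum>i<m. b i) \<le> n \<longrightarrow>
               (\<forall>l\<in>{1..m}. \<exists>i<m. \<forall>l'\<in>{1..l}.
                  chain_sum m b i l' \<le> chain_sum m t i l')))"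
proof
  assume "\<exists>t :: nat \<Rightarrow> real.
            (\<Sum>i<m. t i) < n \<and>
            (\<forall>b :: nat \<Rightarrow> real.
               (\<forall>i<m. u i \<le> b i \<and> b i \<le> v i) \<and> (\<Sum>i<m. b i) \<le> n \<longrightarrow>
               (\<forall>l\<in>{1..m}. \<exists>i<m. \<forall>l'\<in>{1..l}.
                  chain_sum m b i l' \<le> chain_sum m t i l'))"
  then obtain t where t1: "(\<Sum>i<m. t i) < n" and
    t2: "\<And>b. (\<forall>i<m. u i \<le> b i \<and> b i \<le> v i) \<and> (\<Sum>i<m. b i) \<le> n \<Longrightarrow>
               (\<forall>l\<in>{1..m}. \<exists>i<m. \<forall>l'\<in>{1..l}.
                  chain_sum m b i l' \<le> chain_sum m t i l')" by blast
  define U where "U = (\<Sum>i<m. u i)"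
  define V where "V = (\<Sum>i<m. v i)"
  define lam where "lam = (if V = U then 0 else (n - U) / (V - U))"
  define b where "b = (\<lambda>i. u i + lam * (v i - u i))"
  have UV: "U \<le> V" using assms U_def V_def by linarith
  have l0: "0 \<le> lam" using UV assms(3) unfolding lam_def U_def by auto
  have l1: "lam \<le> 1" using UV assms(4) unfolding lam_def V_def U_def by (auto simp: field_simps)
  have sb: "(\<Sum>i<m. b i) = n"
  proof -
    have "(\<Sum>i<m. b i) = U + lam * (V - U)"
      unfolding b_def U_def V_def by (simp add: sum.distrib sum_distrib_left sum_subtractf algebra_simps)
    also have "\<dots> = n" using UV assms(3,4) unfolding lam_def U_def V_def by auto
    finally show ?thesis .
  qed
  have rng: "\<forall>i<m. u i \<le> b i \<and> b i \<le> v i"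
  proof (intro allI impI conjI)
    fix i assume "i < m"
    then have d: "0 \<le> v i - u i" using assms(2) by auto
    show "u i \<le> b i" unfolding b_def using d l0 by simp
    have "lam * (v i - u i) \<le> 1 * (v i - u i)" using d l1 by (intro mult_right_mono) auto
    then show "b i \<le> v i" unfolding b_def by simp
  qed
  have "m \<in> {1..m}" using assms(1) by simp
  then obtain i where "chain_sum m b i m \<le> chain_sum m t i m"
    using t2[of b] rng sb by fastforce
  then have "(\<Sum>j<m. b j) \<le> (\<Sum>j<m. t j)"
    unfolding chain_sum_def using full_period[OF assms(1)] by metis
  then show False using sb t1 by simp
qed

end
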